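(* Let $(V,E,\sigma)$ be an influence graph and let $\mu : V \rightarrow \{+,-\}$ be a (partial) vertex labeling. If $X$ is an answer set of the disjunctive logic program $P_D\cup\tau((V,E,\sigma),\mu)$, then $\{i \mid \mathit{active}(i)\in X\}$ is a Minimal Inconsistent Core.
   Context: An influence graph is a triple $(V,E,\sigma)$ where $V$ is a finite set of vertices, $E\subseteq V\times V$ is a set of directed edges (an edge from $j$ to $i$ is written $j\rightarrow i$), and $\sigma : E\rightarrow\{+,-\}$ is a partial labeling of the edges; in addition, some vertices of $V$ are designated as input vertices. Signs are multiplied as numbers ($++=--=+$, $+-=-+=-$). Given a partial vertex labeling $\mu:V\rightarrow\{+,-\}$ and total labelings $\sigma':E\rightarrow\{+,-\}$, $\mu':V\rightarrow\{+,-\}$, the value $\mu'(i)$ is called consistent if there is an edge $j\rightarrow i$ in $E$ with $\mu'(i)=\mu'(j)\sigma'(j,i)$. A subset $W\subseteq V$ is a Minimal Inconsistent Core (MIC) if (1) for all total extensions $\sigma'$ of $\sigma$ and $\mu'$ of $\mu$ there is some non-input vertex $i\in W$ such that $\mu'(i)$ is inconsistent, and (2) for every proper subset $W'\subset W$ there are total extensions $\sigma'$ of $\sigma$ and $\mu'$ of $\mu$ such that $\mu'(i)$ is consistent for every non-input vertex $i\in W'$. Answer set semantics: a disjunctive logic program is a set of rules $a_1;\dots;a_l \leftarrow b_1,\dots,b_m,\mathit{not}\ c_1,\dots,\mathit{not}\ c_n$ (with $l=0$ giving an integrity constraint, whose empty head is false). Rules with (capitalized) variables stand for all their ground instances obtained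 by substituting constants occurring in the program; a built-in comparison such as $S\neq T$ keeps only instances where the substituted constants differ. A conditional literal $\mathit{opposite}(U,V):\mathit{edge}(U,V)$ in a body, for fixed $V=v$, stands for the conjunction of all atoms $\mathit{opposite}(u,v)$ such that $\mathit{edge}(u,v)$ is a fact of the program (the empty conjunction if there is none). For a set $X$ of ground atoms, the reduct $P^X$ consists of $\{a_1,\dots,a_l\}\leftarrow b_1,\dots,b_m$ for each ground rule with $\{c_1,\dots,c_n\}\cap X=\emptyset$; $X$ is an answer set of $P$ if it is a $\subseteq$-minimal model of $P^X$. Here $+$ and $-$ are constants and vertex names are constants. The instance $\tau((V,E,\sigma),\mu)$ is the set of facts: $\mathit{vertex}(i)$ for each $i\in V$; $\mathit{edge}(j,i)$ for each $j\rightarrow i$ in $E$; $\mathit{observedE}(j,i,s)$ whenever $\sigma(j,i)=s$ is defined; $\mathit{observedV}(i,s)$ whenever $\mu(i)=s$ is defined; $\mathit{input}(i)$ for each input vertex $i$. The program $P_D$ consists of the rules $\mathit{labelV}(V,S)\leftarrow \mathit{observedV}(V,S)$; $\mathit{labelE}(U,V,S)\leftarrow \mathit{observedE}(U,V,S)$; $\mathit{active}(V);\mathit{inactive}(V)\leftarrow \mathit{vertex}(V),\mathit{not}\ \mathit{input}(V)$; $\mathit{edgeMIC}(U,V)\leftarrow \mathit{edge}(U,V),\mathit{active}(V)$; $\mathit{vertexMIC}(U)\leftarrow \mathit{edgeMIC}(U,V)$; $\mathit{vertexMIC}(V)\leftarrow \mathit{active}(V)$; $\mathit{labelV}(V,+);\mathit{labelV}(V,-)\leftarrow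 \mathit{vertexMIC}(V)$; $\mathit{labelE}(U,V,+);\mathit{labelE}(U,V,-)\leftarrow \mathit{edgeMIC}(U,V)$; $\mathit{opposite}(U,V)\leftarrow \mathit{labelE}(U,V,-),\mathit{labelV}(U,S),\mathit{labelV}(V,S)$; $\mathit{opposite}(U,V)\leftarrow \mathit{labelE}(U,V,+),\mathit{labelV}(U,S),\mathit{labelV}(V,T),S\neq T$; $\mathit{bottom}\leftarrow \mathit{active}(V),\mathit{opposite}(U,V):\mathit{edge}(U,V)$; $\leftarrow \mathit{not}\ \mathit{bottom}$; $\mathit{labelV}(V,+)\leftarrow \mathit{bottom},\mathit{vertex}(V)$; $\mathit{labelV}(V,-)\leftarrow \mathit{bottom},\mathit{vertex}(V)$; $\mathit{labelE}(U,V,+)\leftarrow \mathit{bottom},\mathit{edge}(U,V)$; $\mathit{labelE}(U,V,-)\leftarrow \mathit{bottom},\mathit{edge}(U,V)$; $\mathit{labelV'}(W,V,+);\mathit{labelV'}(W,V,-)\leftarrow \mathit{active}(W),\mathit{vertexMIC}(V)$; $\mathit{labelE'}(W,U,V,+);\mathit{labelE'}(W,U,V,-)\leftarrow \mathit{active}(W),\mathit{edgeMIC}(U,V)$; $\mathit{labelV'}(W,V,S)\leftarrow \mathit{active}(W),\mathit{observedV}(V,S)$; $\mathit{labelE'}(W,U,V,S)\leftarrow \mathit{active}(W),\mathit{observedE}(U,V,S)$; $\mathit{receive'}(W,V,+)\leftarrow \mathit{labelE'}(W,U,V,S),\mathit{labelV'}(W,U,S),V\neq W$; $\mathit{receive'}(W,V,-)\leftarrow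 \mathit{labelE'}(W,U,V,S),\mathit{labelV'}(W,U,T),V\neq W,S\neq T$; $\leftarrow \mathit{labelV'}(W,V,S),\mathit{active}(V),V\neq W,\mathit{not}\ \mathit{receive'}(W,V,S)$. *)

theory Defs
  imports Main
begin

datatype sign = Plus | Minus

fun smult :: "sign \<Rightarrow> sign \<Rightarrow> sign" where
  "smult Plus s = s"
| "smult Minus Plus = Minus"
| "smult Minus Minus = Plus"

definition influence_graph ::
  "'v set \<Rightarrow> ('v \<times> 'v) set \<Rightarrow> ('v \<times> 'v \<rightharpoonup> sign) \<Rightarrow> 'v set \<Rightarrow> bool" where
  "influence_graph V E \<sigma> Inp \<longleftrightarrow>
     finite V \<and> E \<subseteq> V \<times> V \<and> dom \<sigma> \<subseteq> E \<and> Inp \<subseteq> V"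

definition vertex_labeling :: "'v set \<Rightarrow> ('v \<rightharpoonup> sign) \<Rightarrow> bool" where
  "vertex_labeling V \<mu> \<longleftrightarrow> dom \<mu> \<subseteq> V"

definition ext_E :: "('v \<times> 'v) set \<Rightarrow> ('v \<times> 'v \<rightharpoonup> sign) \<Rightarrow> ('v \<times> 'v \<Rightarrow> sign) \<Rightarrow> bool" where
  "ext_E E \<sigma> \<sigma>' \<longleftrightarrow> (\<forall>e\<in>E. \<forall>s. \<sigma> e = Some s \<longrightarrow> \<sigma>' e = s)"

definition ext_V :: "'v set \<Rightarrow> ('v \<rightharpoonup> sign) \<Rightarrow> ('v \<Rightarrow> sign) \<Rightarrow> bool" where
  "ext_V V \<mu> \<mu>' \<longleftrightarrow> (\<forall>i\<in>V. \<forall>s. \<mu> i = Some s \<longrightarrow> \<mu>' i = s)"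

definition consistent_at ::
  "('v \<times> 'v) set \<Rightarrow> ('v \<times> 'v \<Rightarrow> sign) \<Rightarrow> ('v \<Rightarrow> sign) \<Rightarrow> 'v \<Rightarrow> bool" where
  "consistent_at E \<sigma>' \<mu>' i \<longleftrightarrow> (\<exists>j. (j, i) \<in> E \<and> \<mu>' i = smult (\<mu>' j) (\<sigma>' (j, i)))"

definition MIC ::
  "'v set \<Rightarrow> ('v \<times> 'v) set \<Rightarrow> ('v \<times> 'v \<rightharpoonup> sign) \<Rightarrow> 'v set \<Rightarrow> ('v \<rightharpoonup> sign) \<Rightarrow> 'v set \<Rightarrow> bool" where
  "MIC V E \<sigma> Inp \<mu> W \<longleftrightarrow>
     W \<subseteq> V \<and>
     (\<forall>\<sigma>' \<mu>'. ext_E E \<sigma> \<sigma>' \<and> ext_V V \<mu> \<mu>' \<longrightarrow>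
        (\<exists>i\<in>W. i \<notin> Inp \<and> \<not> consistent_at E \<sigma>' \<mu>' i)) \<and>
     (\<forall>W'. W' \<subset> W \<longrightarrow>
        (\<exists>\<sigma>' \<mu>'. ext_E E \<sigma> \<sigma>' \<and> ext_V V \<mu> \<mu>' \<and>
           (\<forall>i\<in>W'. i \<notin> Inp \<longrightarrow> consistent_at E \<sigma>' \<mu>' i)))"

text \<open>A ground rule is (head, positive body, negative body).\<close>
type_synonym 'a rule = "'a set \<times> 'a set \<times> 'a set"

definition reduct :: "'a rule set \<Rightarrow> 'a set \<Rightarrow> ('a set \<times> 'a set) set" where
  "reduct P X = {(H, B) | H B N. (H, B, N) \<in> P \<and> N \<inter> X = {}}"

definition is_model :: "'a set \<Rightarrow> ('a set \<times> 'a set) set \<Rightarrow> bool" where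
  "is_model M Q \<longleftrightarrow> (\<forall>(H, B) \<in> Q. B \<subseteq> M \<longrightarrow> H \<inter> M \<noteq> {})"

definition answer_set :: "'a rule set \<Rightarrow> 'a set \<Rightarrow> bool" where
  "answer_set P X \<longleftrightarrow> is_model X (reduct P X) \<and> (\<forall>M. M \<subset> X \<longrightarrow> \<not> is_model M (reduct P X))"

datatype 'v const = Vx 'v | Sg sign

datatype 'v atom =
    A_vertex "'v const"
  | A_edge "'v const" "'v const"
  | A_observedE "'v const" "'v const" "'v const"
  | A_observedV "'v const" "'v const"
  | A_input "'v const"
  | A_labelV "'v const" "'v const"
  | A_labelE "'v const" "'v const" "'v const"
  | A_active "'v const"
  | A_inactive "'v const"
  | A_edgeMIC "'v const" "'v const"
  | A_vertexMIC "'v const"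
  | A_opposite "'v const" "'v const"
  | A_bottom
  | A_labelV' "'v const" "'v const" "'v const"
  | A_labelE' "'v const" "'v const" "'v const" "'v const"
  | A_receive' "'v const" "'v const" "'v const"


definition tau_facts ::
  "'v set \<Rightarrow> ('v \<times> 'v) set \<Rightarrow> ('v \<times> 'v \<rightharpoonup> sign) \<Rightarrow> 'v set \<Rightarrow> ('v \<rightharpoonup> sign) \<Rightarrow> 'v atom set" where
  "tau_facts V E \<sigma> Inp \<mu> =
     {A_vertex (Vx i) | i. i \<in> V}
   \<union> {A_edge (Vx j) (Vx i) | j i. (j, i) \<in> E}
   \<union> {A_observedE (Vx j) (Vx i) (Sg s) | j i s. (j, i) \<in> E \<and> \<sigma> (j, i) = Some s}
   \<union> {A_observedV (Vx i) (Sg s) | i s. i \<in> V \<and> \<mu> i = Some s}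
   \<union> {A_input (Vx i) | i. i \<in> Inp}"

definition consts_of :: "'v set \<Rightarrow> 'v const set" where
  "consts_of V = Vx ` V \<union> {Sg Plus, Sg Minus}"

text \<open>Grounding of P_D \<union> tau over the constants consts_of V.
  The conditional literal opposite(U,V):edge(U,V) expands, for V = c, to all
  opposite(u,c) with edge(u,c) a fact of the program.\<close>
definition ground_PD ::
  "'v set \<Rightarrow> ('v \<times> 'v) set \<Rightarrow> ('v \<times> 'v \<rightharpoonup> sign) \<Rightarrow> 'v set \<Rightarrow> ('v \<rightharpoonup> sign) \<Rightarrow> 'v atom rule set" where
  "ground_PD V E \<sigma> Inp \<mu> = (let C = consts_of V; F = tau_facts V E \<sigma> Inp \<mu>;
      P = Sg Plus; M = Sg Minus in
     {({a}, {}, {}) | a. a \<in> F}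
   \<union> {({A_labelV v s}, {A_observedV v s}, {}) | v s. v \<in> C \<and> s \<in> C}
   \<union> {({A_labelE u v s}, {A_observedE u v s}, {}) | u v s. u \<in> C \<and> v \<in> C \<and> s \<in> C}
   \<union> {({A_active v, A_inactive v}, {A_vertex v}, {A_input v}) | v. v \<in> C}
   \<union> {({A_edgeMIC u v}, {A_edge u v, A_active v}, {}) | u v. u \<in> C \<and> v \<in> C}
   \<union> {({A_vertexMIC u}, {A_edgeMIC u v}, {}) | u v. u \<in> C \<and> v \<in> C}
   \<union> {({A_vertexMIC v}, {A_active v}, {}) | v. v \<in> C}
   \<union> {({A_labelV v P, A_labelV v M}, {A_vertexMIC v}, {}) | v. v \<in> C}
   \<union> {({A_labelE u v P, A_labelE u v M}, {A_edgeMIC u v}, {}) | u v. u \<in> C \<and> v \<in> C}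
   \<union> {({A_opposite u v}, {A_labelE u v M, A_labelV u s, A_labelV v s}, {})
        | u v s. u \<in> C \<and> v \<in> C \<and> s \<in> C}
   \<union> {({A_opposite u v}, {A_labelE u v P, A_labelV u s, A_labelV v t}, {})
        | u v s t. u \<in> C \<and> v \<in> C \<and> s \<in> C \<and> t \<in> C \<and> s \<noteq> t}
   \<union> {({A_bottom}, insert (A_active v) {A_opposite u v | u. A_edge u v \<in> F}, {}) | v. v \<in> C}
   \<union> {({}, {}, {A_bottom})}
   \<union> {({A_labelV v P}, {A_bottom, A_vertex v}, {}) | v. v \<in> C}
   \<union> {({A_labelV v M}, {A_bottom, A_vertex v}, {}) | v. v \<in> C}
   \<union> {({A_labelE u v P}, {A_bottom, A_edge u v}, {}) | u v. u \<in> C \<and> v \<in> C}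
   \<union> {({A_labelE u v M}, {A_bottom, A_edge u v}, {}) | u v. u \<in> C \<and> v \<in> C}
   \<union> {({A_labelV' w v P, A_labelV' w v M}, {A_active w, A_vertexMIC v}, {})
        | w v. w \<in> C \<and> v \<in> C}
   \<union> {({A_labelE' w u v P, A_labelE' w u v M}, {A_active w, A_edgeMIC u v}, {})
        | w u v. w \<in> C \<and> u \<in> C \<and> v \<in> C}
   \<union> {({A_labelV' w v s}, {A_active w, A_observedV v s}, {})
        | w v s. w \<in> C \<and> v \<in> C \<and> s \<in> C}
   \<union> {({A_labelE' w u v s}, {A_active w, A_observedE u v s}, {})
        | w u v s. w \<in> C \<and> u \<in> C \<and> v \<in> C \<and> s \<in> C}
   \<union> {({A_receive' w v P}, {A_labelE' w u v s, A_labelV' w u s}, {})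
        | w u v s. w \<in> C \<and> u \<in> C \<and> v \<in> C \<and> s \<in> C \<and> v \<noteq> w}
   \<union> {({A_receive' w v M}, {A_labelE' w u v s, A_labelV' w u t}, {})
        | w u v s t. w \<in> C \<and> u \<in> C \<and> v \<in> C \<and> s \<in> C \<and> t \<in> C \<and> v \<noteq> w \<and> s \<noteq> t}
   \<union> {({}, {A_labelV' w v s, A_active v}, {A_receive' w v s})
        | w v s. w \<in> C \<and> v \<in> C \<and> s \<in> C \<and> v \<noteq> w})"

end

theory Submission
  imports Defs
begin

lemma reduct_mem: "(H,B) \<in> reduct P X \<longleftrightarrow> (\<exists>N. (H,B,N) \<in> P \<and> N \<inter> X = {})"
  unfolding reduct_def by auto

lemma model_rule:
  assumes "answer_set P X" "(H,B,N) \<in> P" "N \<inter> X = {}" "B \<subseteq> X"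
  shows "H \<inter> X \<noteq> {}"
proof -
  have "is_model X (reduct P X)" using assms(1) unfolding answer_set_def by simp
  moreover have "(H,B) \<in> reduct P X" using assms(2,3) reduct_mem by blast
  ultimately show ?thesis using assms(4) unfolding is_model_def by auto
qed

lemma supported:
  assumes "answer_set P X" "a \<in> X"
  shows "\<exists>H B N. (H,B,N) \<in> P \<and> N \<inter> X = {} \<and> B \<subseteq> X - {a} \<and> H \<inter> X = {a}"
proof -
  have "X - {a} \<subset> X" using assms(2) by blast
  hence "\<not> is_model (X - {a}) (reduct P X)" using assms(1) unfolding answer_set_def by blast
  then obtain H B where hb: "(H,B) \<in> reduct P X" "B \<subseteq> X - {a}" "H \<inter> (X - {a}) = {}"
    unfolding is_model_def by auto
  then obtain N where r: "(H,B,N) \<in> P" "N \<inter> X = {}" using reduct_mem by blast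
  have "H \<inter> X \<noteq> {}" using model_rule[OF assms(1) r] hb(2) by blast
  thus ?thesis using r hb by blast
qed
primrec wf :: "'v set \<Rightarrow> ('v \<times> 'v) set \<Rightarrow> ('v \<times> 'v \<rightharpoonup> sign) \<Rightarrow> 'v set \<Rightarrow> ('v \<rightharpoonup> sign) \<Rightarrow> 'v atom \<Rightarrow> bool"  where
  "wf V E \<sigma> Inp \<mu> (A_vertex v) = (\<exists>i. v = Vx i \<and> i \<in> V)"
  | "wf V E \<sigma> Inp \<mu> (A_edge u v) = (\<exists>j i. u = Vx j \<and> v = Vx i \<and> (j,i) \<in> E)"
  | "wf V E \<sigma> Inp \<mu> (A_observedE u v s) = (\<exists>j i s0. u = Vx j \<and> v = Vx i \<and> s = Sg s0 \<and> (j,i) \<in> E \<and> \<sigma> (j,i) = Some s0)"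
  | "wf V E \<sigma> Inp \<mu> (A_observedV v s) = (\<exists>i s0. v = Vx i \<and> s = Sg s0 \<and> i \<in> V \<and> \<mu> i = Some s0)"
  | "wf V E \<sigma> Inp \<mu> (A_input v) = (\<exists>i. v = Vx i \<and> i \<in> Inp)"
  | "wf V E \<sigma> Inp \<mu> (A_labelV v s) = (\<exists>i s0. v = Vx i \<and> s = Sg s0 \<and> i \<in> V)"
  | "wf V E \<sigma> Inp \<mu> (A_labelE u v s) = (\<exists>j i s0. u = Vx j \<and> v = Vx i \<and> s = Sg s0 \<and> (j,i) \<in> E)"
  | "wf V E \<sigma> Inp \<mu> (A_active v) = (\<exists>i. v = Vx i \<and> i \<in> V \<and> i \<notin> Inp)"
  | "wf V E \<sigma> Inp \<mu> (A_inactive v) = (\<exists>i. v = Vx i \<and> i \<in> V \<and> i \<notin> Inp)"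
  | "wf V E \<sigma> Inp \<mu> (A_edgeMIC u v) = (\<exists>j i. u = Vx j \<and> v = Vx i \<and> (j,i) \<in> E)"
  | "wf V E \<sigma> Inp \<mu> (A_vertexMIC v) = (\<exists>i. v = Vx i \<and> i \<in> V)"
  | "wf V E \<sigma> Inp \<mu> (A_opposite u v) = (\<exists>j i. u = Vx j \<and> v = Vx i \<and> (j,i) \<in> E)"
  | "wf V E \<sigma> Inp \<mu> (A_bottom) = True"
  | "wf V E \<sigma> Inp \<mu> (A_labelV' w v s) = (\<exists>w0 i s0. w = Vx w0 \<and> v = Vx i \<and> s = Sg s0 \<and> i \<in> V)"
  | "wf V E \<sigma> Inp \<mu> (A_labelE' w u v s) = (\<exists>w0 j i s0. w = Vx w0 \<and> u = Vx j \<and> v = Vx i \<and> s = Sg s0 \<and> (j,i) \<in> E)"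
  | "wf V E \<sigma> Inp \<mu> (A_receive' w v s) = (\<exists>w0 i s0. w = Vx w0 \<and> v = Vx i \<and> s = Sg s0)"

lemma tau_wf:
  assumes "a \<in> tau_facts V E \<sigma> Inp \<mu>"
  shows "wf V E \<sigma> Inp \<mu> a"
  using assms unfolding tau_facts_def by auto

lemma closure:
  assumes "E \<subseteq> V \<times> V" "(H,B,N) \<in> ground_PD V E \<sigma> Inp \<mu>" "N \<inter> X = {}"
    "\<forall>i\<in>Inp. A_input (Vx i) \<in> X" "\<forall>b\<in>B. wf V E \<sigma> Inp \<mu> b"
  shows "\<forall>h\<in>H. wf V E \<sigma> Inp \<mu> h"
proof -
  have EV: "\<And>j i. (j,i) \<in> E \<Longrightarrow> j \<in> V" using assms(1) by blast
  show ?thesis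
  using assms(2,3,5) unfolding ground_PD_def Let_def
  apply (simp only: Un_iff)
  apply (elim disjE)
  subgoal using tau_wf by fastforce
  subgoal by auto
  subgoal by auto
  subgoal using assms(4) by auto
  subgoal by auto
  subgoal using EV by auto
  subgoal by auto
  subgoal by auto
  subgoal by auto
  subgoal by auto
  subgoal by auto
  subgoal by auto
  subgoal by auto
  subgoal by auto
  subgoal by auto
  subgoal by auto
  subgoal by auto
  subgoal by auto
  subgoal by auto
  subgoal by auto
  subgoal by auto
  subgoal by auto
  subgoal by auto
  subgoal by auto
  done
qed

lemma rule_in1: "a \<in> tau_facts V E \<sigma> Inp \<mu> \<Longrightarrow> ({a},{},{}) \<in> ground_PD V E \<sigma> Inp \<mu>"
  unfolding ground_PD_def Let_def
  apply (rule UnI1) apply (rule UnI1) apply (rule UnI1) apply (rule UnI1) apply (rule UnI1) apply (rule UnI1) apply (rule UnI1) apply (rule UnI1) apply (rule UnI1) apply (rule UnI1) apply (rule UnI1) apply (rule UnI1) apply (rule UnI1) apply (rule UnI1) apply (rule UnI1) apply (rule UnI1) apply (rule UnI1) apply (rule UnI1) apply (rule UnI1) apply (rule UnI1) apply (rule UnI1) apply (rule UnI1) apply (rule UnI1) by blast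
lemma rule_in2: "({}, {}, {A_bottom}) \<in> ground_PD V E \<sigma> Inp \<mu>"
  unfolding ground_PD_def Let_def
  apply (rule UnI1) apply (rule UnI1) apply (rule UnI1) apply (rule UnI1) apply (rule UnI1) apply (rule UnI1) apply (rule UnI1) apply (rule UnI1) apply (rule UnI1) apply (rule UnI1) apply (rule UnI1) apply (rule UnI2) by blast
lemma rule_in3: "i \<in> V \<Longrightarrow> ({A_labelV (Vx i) (Sg s)}, {A_bottom, A_vertex (Vx i)}, {}) \<in> ground_PD V E \<sigma> Inp \<mu>"
  unfolding ground_PD_def Let_def
  apply (cases s)
  subgoal apply (rule UnI1) apply (rule UnI1) apply (rule UnI1) apply (rule UnI1) apply (rule UnI1) apply (rule UnI1) apply (rule UnI1) apply (rule UnI1) apply (rule UnI1) apply (rule UnI1) apply (rule UnI2) unfolding consts_of_def by blast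
  subgoal apply (rule UnI1) apply (rule UnI1) apply (rule UnI1) apply (rule UnI1) apply (rule UnI1) apply (rule UnI1) apply (rule UnI1) apply (rule UnI1) apply (rule UnI1) apply (rule UnI2) unfolding consts_of_def by blast
  done
lemma rule_in4: "j \<in> V \<Longrightarrow> i \<in> V \<Longrightarrow> ({A_labelE (Vx j) (Vx i) (Sg s)}, {A_bottom, A_edge (Vx j) (Vx i)}, {}) \<in> ground_PD V E \<sigma> Inp \<mu>"
  unfolding ground_PD_def Let_def
  apply (cases s)
  subgoal apply (rule UnI1) apply (rule UnI1) apply (rule UnI1) apply (rule UnI1) apply (rule UnI1) apply (rule UnI1) apply (rule UnI1) apply (rule UnI1) apply (rule UnI2) unfolding consts_of_def by blast
  subgoal apply (rule UnI1) apply (rule UnI1) apply (rule UnI1) apply (rule UnI1) apply (rule UnI1) apply (rule UnI1) apply (rule UnI1) apply (rule UnI2) unfolding consts_of_def by blast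
  done
lemma rule_in5: "j \<in> V \<Longrightarrow> i \<in> V \<Longrightarrow> ({A_opposite (Vx j) (Vx i)}, {A_labelE (Vx j) (Vx i) (Sg Minus), A_labelV (Vx j) (Sg Plus), A_labelV (Vx i) (Sg Plus)}, {}) \<in> ground_PD V E \<sigma> Inp \<mu>"
  unfolding ground_PD_def Let_def
  apply (rule UnI1) apply (rule UnI1) apply (rule UnI1) apply (rule UnI1) apply (rule UnI1) apply (rule UnI1) apply (rule UnI1) apply (rule UnI1) apply (rule UnI1) apply (rule UnI1) apply (rule UnI1) apply (rule UnI1) apply (rule UnI1) apply (rule UnI1) apply (rule UnI2) unfolding consts_of_def by blast
lemmas rule_in = rule_in1 rule_in2 rule_in3 rule_in4 rule_in5

locale asp =
  fixes V :: "'v set" and E \<sigma> Inp \<mu> X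
  assumes EV: "E \<subseteq> V \<times> V" and AS: "answer_set (ground_PD V E \<sigma> Inp \<mu>) X"
begin

abbreviation "P \<equiv> ground_PD V E \<sigma> Inp \<mu>"
abbreviation "wfa \<equiv> wf V E \<sigma> Inp \<mu>"

lemma fact_in: "a \<in> tau_facts V E \<sigma> Inp \<mu> \<Longrightarrow> a \<in> X"
  using model_rule[OF AS rule_in(1)] by blast

lemma bottom_in: "A_bottom \<in> X"
  using model_rule[OF AS rule_in(2)] by blast

lemma X_wf: "a \<in> X \<Longrightarrow> wfa a"
proof -
  let ?Y = "{a \<in> X. wfa a}"
  have inp: "\<forall>i\<in>Inp. A_input (Vx i) \<in> X" using fact_in unfolding tau_facts_def by blast
  have "is_model ?Y (reduct P X)"
    unfolding is_model_def
  proof (clarify)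
    fix H B assume hb: "(H,B) \<in> reduct P X" "B \<subseteq> ?Y" "H \<inter> ?Y = {}"
    then obtain N where r: "(H,B,N) \<in> P" "N \<inter> X = {}" using reduct_mem by blast
    have "H \<inter> X \<noteq> {}" using model_rule[OF AS r] hb(2) by blast
    moreover have "\<forall>h\<in>H. wfa h" using closure[OF EV r inp] hb(2) by blast
    ultimately show False using hb(3) by blast
  qed
  hence "\<not> ?Y \<subset> X" using AS unfolding answer_set_def by blast
  hence "?Y = X" by blast
  thus "a \<in> X \<Longrightarrow> wfa a" by blast
qed

lemma sat_labelV: "i \<in> V \<Longrightarrow> A_labelV (Vx i) (Sg s) \<in> X"
  using model_rule[OF AS rule_in(3)] bottom_in fact_in[of "A_vertex (Vx i)"]
  unfolding tau_facts_def by blast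

lemma sat_labelE: "(j,i) \<in> E \<Longrightarrow> A_labelE (Vx j) (Vx i) (Sg s) \<in> X"
  using model_rule[OF AS rule_in(4)] bottom_in fact_in[of "A_edge (Vx j) (Vx i)"] EV
  unfolding tau_facts_def by blast

lemma sat_opp: "(j,i) \<in> E \<Longrightarrow> A_opposite (Vx j) (Vx i) \<in> X"
  using model_rule[OF AS rule_in(5)] sat_labelE sat_labelV EV by blast

end

primrec keep :: "('v \<Rightarrow> sign) \<Rightarrow> ('v \<times> 'v \<Rightarrow> sign) \<Rightarrow> 'v atom \<Rightarrow> bool" where
  "keep m s (A_vertex v) = True"
| "keep m s (A_edge u v) = True"
| "keep m s (A_observedE u v x) = True"
| "keep m s (A_observedV v x) = True"
| "keep m s (A_input v) = True"
| "keep m s (A_labelV v x) = (case (v,x) of (Vx i, Sg x0) \<Rightarrow> x0 = m i | _ \<Rightarrow> True)"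
| "keep m s (A_labelE u v x) = (case (u,v,x) of (Vx j, Vx i, Sg x0) \<Rightarrow> x0 = s (j,i) | _ \<Rightarrow> True)"
| "keep m s (A_active v) = True"
| "keep m s (A_inactive v) = True"
| "keep m s (A_edgeMIC u v) = True"
| "keep m s (A_vertexMIC v) = True"
| "keep m s (A_opposite u v) = (case (u,v) of (Vx j, Vx i) \<Rightarrow> m i \<noteq> smult (m j) (s (j,i)) | _ \<Rightarrow> True)"
| "keep m s A_bottom = False"
| "keep m s (A_labelV' w v x) = True"
| "keep m s (A_labelE' w u v x) = True"
| "keep m s (A_receive' w v x) = True"

context asp begin

lemma M_model:
  assumes cons: "\<And>i. A_active (Vx i) \<in> X \<Longrightarrow> \<exists>j. (j,i)\<in>E \<and> m i = smult (m j) (s (j,i))"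
    and extV: "\<And>i x. i \<in> V \<Longrightarrow> \<mu> i = Some x \<Longrightarrow> m i = x"
    and extE: "\<And>j i x. (j,i) \<in> E \<Longrightarrow> \<sigma> (j,i) = Some x \<Longrightarrow> s (j,i) = x"
    and r: "(H,B,N) \<in> P" "N \<inter> X = {}" "B \<subseteq> {a\<in>X. keep m s a}"
  shows "H \<inter> {a\<in>X. keep m s a} \<noteq> {}"
proof -
  have HX: "H \<inter> X \<noteq> {}" using model_rule[OF AS r(1,2)] r(3) by blast
  have sm: "\<And>x. x \<noteq> smult x Minus" "\<And>x y. x \<noteq> y \<Longrightarrow> y \<noteq> smult x Plus"
    by (case_tac x; simp)+ 
  show ?thesis
  using r(1,2,3) unfolding ground_PD_def Let_def
  apply (simp only: Un_iff)
  apply (elim disjE)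
  subgoal using HX unfolding tau_facts_def by auto
  subgoal premises p proof -
    from p(3) obtain v x where e: "H = {A_labelV v x}" "B = {A_observedV v x}" by blast
    hence "A_observedV v x \<in> X" using p(2) by blast
    then obtain i x0 where "v = Vx i" "x = Sg x0" "i \<in> V" "\<mu> i = Some x0" using X_wf by fastforce
    thus ?thesis using e extV sat_labelV by auto
  qed
  subgoal premises p proof -
    from p(3) obtain u v x where e: "H = {A_labelE u v x}" "B = {A_observedE u v x}" by blast
    hence "A_observedE u v x \<in> X" using p(2) by blast
    then obtain j i x0 where "u = Vx j" "v = Vx i" "x = Sg x0" "(j,i) \<in> E" "\<sigma> (j,i) = Some x0" using X_wf by fastforce
    thus ?thesis using e extE sat_labelE by auto
  qed
  subgoal using HX by auto
  subgoal using HX by auto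
  subgoal using HX by auto
  subgoal using HX by auto
  subgoal premises p proof -
    from p(3) obtain v where e: "H = {A_labelV v (Sg Plus), A_labelV v (Sg Minus)}" "B = {A_vertexMIC v}" by blast
    hence "A_vertexMIC v \<in> X" using p(2) by blast
    then obtain i where i: "v = Vx i" "i \<in> V" using X_wf by fastforce
    have "A_labelV (Vx i) (Sg (m i)) \<in> H" using e i by (cases "m i") auto
    thus ?thesis using i sat_labelV by auto
  qed
  subgoal premises p proof -
    from p(3) obtain u v where e: "H = {A_labelE u v (Sg Plus), A_labelE u v (Sg Minus)}" "B = {A_edgeMIC u v}" by blast
    hence "A_edgeMIC u v \<in> X" using p(2) by blast
    then obtain j i where i: "u = Vx j" "v = Vx i" "(j,i) \<in> E" using X_wf by fastforce
    have "A_labelE (Vx j) (Vx i) (Sg (s (j,i))) \<in> H" using e i by (cases "s (j,i)") auto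
    thus ?thesis using i sat_labelE by auto
  qed
  subgoal premises p proof -
    from p(3) obtain u v x where e: "H = {A_opposite u v}" "B = {A_labelE u v (Sg Minus), A_labelV u x, A_labelV v x}" by blast
    hence b: "A_labelE u v (Sg Minus) \<in> X" "A_labelV u x \<in> X" "A_labelV v x \<in> X"
      "keep m s (A_labelE u v (Sg Minus))" "keep m s (A_labelV u x)" "keep m s (A_labelV v x)"
      using p(2) by auto
    have w: "wfa (A_labelE u v (Sg Minus))" "wfa (A_labelV u x)" using X_wf[OF b(1)] X_wf[OF b(2)] by auto
    from w(1) obtain j i where i1: "u = Vx j" "v = Vx i" "(j,i) \<in> E" by auto
    from w(2) obtain x0 where "x = Sg x0" by auto
    note i = i1 this
    have "s (j,i) = Minus" "m j = x0" "m i = x0" using b(4,5,6) i by auto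
    hence "keep m s (A_opposite u v)" using i sm(1) by auto
    thus ?thesis using i e sat_opp by auto
  qed
  subgoal premises p proof -
    from p(3) obtain u v x y where e: "H = {A_opposite u v}" "B = {A_labelE u v (Sg Plus), A_labelV u x, A_labelV v y}" "x \<noteq> y" by blast
    hence b: "A_labelE u v (Sg Plus) \<in> X" "A_labelV u x \<in> X" "A_labelV v y \<in> X"
      "keep m s (A_labelE u v (Sg Plus))" "keep m s (A_labelV u x)" "keep m s (A_labelV v y)"
      using p(2) by auto
    have w: "wfa (A_labelE u v (Sg Plus))" "wfa (A_labelV u x)" "wfa (A_labelV v y)" using X_wf[OF b(1)] X_wf[OF b(2)] X_wf[OF b(3)] by auto
    from w(1) obtain j i where i1: "u = Vx j" "v = Vx i" "(j,i) \<in> E" by auto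
    from w(2) obtain x0 where i2: "x = Sg x0" by auto
    from w(3) obtain y0 where "y = Sg y0" by auto
    note i = i1 i2 this
    have "s (j,i) = Plus" "m j = x0" "m i = y0" "x0 \<noteq> y0" using b(4,5,6) i e(3) by auto
    hence "keep m s (A_opposite u v)" using i sm(2) by auto
    thus ?thesis using i e sat_opp by auto
  qed
  subgoal premises p proof -
    from p(3) obtain v where e: "B = insert (A_active v) {A_opposite u v | u. A_edge u v \<in> tau_facts V E \<sigma> Inp \<mu>}" by blast
    hence "A_active v \<in> X" using p(2) by blast
    then obtain i where i: "v = Vx i" using X_wf by fastforce
    with \<open>A_active v \<in> X\<close> obtain j where j: "(j,i)\<in>E" "m i = smult (m j) (s (j,i))" using cons by blast
    have "A_edge (Vx j) (Vx i) \<in> tau_facts V E \<sigma> Inp \<mu>" using j unfolding tau_facts_def by blast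
    hence "A_opposite (Vx j) v \<in> B" using e i by blast
    hence "keep m s (A_opposite (Vx j) (Vx i))" using p(2) i by blast
    thus ?thesis using j by simp
  qed
  subgoal premises p using p bottom_in by blast
  subgoal premises p using p(2,3) by auto
  subgoal premises p using p(2,3) by auto
  subgoal premises p using p(2,3) by auto
  subgoal premises p using p(2,3) by auto
  subgoal using HX by auto
  subgoal using HX by auto
  subgoal using HX by auto
  subgoal using HX by auto
  subgoal using HX by auto
  subgoal using HX by auto
  subgoal using HX by auto
  done
qed

end

lemma head_bottom: "(H,B,N) \<in> ground_PD V E \<sigma> Inp \<mu> \<Longrightarrow> A_bottom \<in> H \<Longrightarrow> \<exists>v. A_active v \<in> B"
  unfolding ground_PD_def Let_def
  apply (simp only: Un_iff)
  apply (elim disjE)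
  subgoal unfolding tau_facts_def by auto
  apply (auto; fail)+
  done

lemma head_labelV': "(H,B,N) \<in> ground_PD V E \<sigma> Inp \<mu> \<Longrightarrow> A_labelV' w v x \<in> H \<Longrightarrow>
   H = {A_labelV' w v (Sg Plus), A_labelV' w v (Sg Minus)} \<or> A_observedV v x \<in> B"
  unfolding ground_PD_def Let_def
  apply (simp only: Un_iff)
  apply (elim disjE)
  subgoal unfolding tau_facts_def by auto
  apply (auto; fail)+
  done

lemma head_labelE': "(H,B,N) \<in> ground_PD V E \<sigma> Inp \<mu> \<Longrightarrow> A_labelE' w u v x \<in> H \<Longrightarrow>
   H = {A_labelE' w u v (Sg Plus), A_labelE' w u v (Sg Minus)} \<or> A_observedE u v x \<in> B"
  unfolding ground_PD_def Let_def
  apply (simp only: Un_iff)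
  apply (elim disjE)
  subgoal unfolding tau_facts_def by auto
  apply (auto; fail)+
  done

lemma head_receive': "(H,B,N) \<in> ground_PD V E \<sigma> Inp \<mu> \<Longrightarrow> A_receive' w v x \<in> H \<Longrightarrow>
   \<exists>u x1 x2. A_labelE' w u v x1 \<in> B \<and> A_labelV' w u x2 \<in> B \<and>
     ((x = Sg Plus \<and> x1 = x2) \<or> (x = Sg Minus \<and> x1 \<noteq> x2))"
  unfolding ground_PD_def Let_def
  apply (simp only: Un_iff)
  apply (elim disjE)
  subgoal unfolding tau_facts_def by auto
  apply (auto; fail)+
  done

lemma rule_in6: "i \<in> V \<Longrightarrow> ({A_vertexMIC (Vx i)}, {A_active (Vx i)}, {}) \<in> ground_PD V E \<sigma> Inp \<mu>"
  unfolding ground_PD_def Let_def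
  apply (rule UnI1) apply (rule UnI1) apply (rule UnI1) apply (rule UnI1) apply (rule UnI1) apply (rule UnI1) apply (rule UnI1) apply (rule UnI1) apply (rule UnI1) apply (rule UnI1) apply (rule UnI1) apply (rule UnI1) apply (rule UnI1) apply (rule UnI1) apply (rule UnI1) apply (rule UnI1) apply (rule UnI1) apply (rule UnI2) unfolding consts_of_def by blast
lemma rule_in7: "w \<in> V \<Longrightarrow> i \<in> V \<Longrightarrow> ({A_labelV' (Vx w) (Vx i) (Sg Plus), A_labelV' (Vx w) (Vx i) (Sg Minus)}, {A_active (Vx w), A_vertexMIC (Vx i)}, {}) \<in> ground_PD V E \<sigma> Inp \<mu>"
  unfolding ground_PD_def Let_def
  apply (rule UnI1) apply (rule UnI1) apply (rule UnI1) apply (rule UnI1) apply (rule UnI1) apply (rule UnI1) apply (rule UnI2) unfolding consts_of_def by blast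
lemma rule_in8: "w \<in> V \<Longrightarrow> i \<in> V \<Longrightarrow> ({A_labelV' (Vx w) (Vx i) (Sg x)}, {A_active (Vx w), A_observedV (Vx i) (Sg x)}, {}) \<in> ground_PD V E \<sigma> Inp \<mu>"
  unfolding ground_PD_def Let_def
  apply (cases x)
  subgoal apply (rule UnI1) apply (rule UnI1) apply (rule UnI1) apply (rule UnI1) apply (rule UnI2) unfolding consts_of_def by blast
  subgoal apply (rule UnI1) apply (rule UnI1) apply (rule UnI1) apply (rule UnI1) apply (rule UnI2) unfolding consts_of_def by blast
  done
lemma rule_in9: "w \<in> V \<Longrightarrow> j \<in> V \<Longrightarrow> i \<in> V \<Longrightarrow> ({A_labelE' (Vx w) (Vx j) (Vx i) (Sg x)}, {A_active (Vx w), A_observedE (Vx j) (Vx i) (Sg x)}, {}) \<in> ground_PD V E \<sigma> Inp \<mu>"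
  unfolding ground_PD_def Let_def
  apply (cases x)
  subgoal apply (rule UnI1) apply (rule UnI1) apply (rule UnI1) apply (rule UnI2) unfolding consts_of_def by blast
  subgoal apply (rule UnI1) apply (rule UnI1) apply (rule UnI1) apply (rule UnI2) unfolding consts_of_def by blast
  done
lemma rule_in10: "w \<in> V \<Longrightarrow> i \<in> V \<Longrightarrow> i \<noteq> w \<Longrightarrow> ({}, {A_labelV' (Vx w) (Vx i) (Sg x), A_active (Vx i)}, {A_receive' (Vx w) (Vx i) (Sg x)}) \<in> ground_PD V E \<sigma> Inp \<mu>"
  unfolding ground_PD_def Let_def
  apply (cases x)
  subgoal  apply (rule UnI2) unfolding consts_of_def by blast
  subgoal  apply (rule UnI2) unfolding consts_of_def by blast
  done

context asp begin

lemma uniqV: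
  assumes a: "A_labelV' w (Vx i) (Sg Plus) \<in> X" and b: "A_labelV' w (Vx i) (Sg Minus) \<in> X"
  shows False
proof -
  have obs: "\<mu> i = Some x" if c: "A_labelV' w (Vx i) (Sg x) \<in> X" "A_labelV' w (Vx i) (Sg y) \<in> X" "x \<noteq> y" for x y
  proof -
    obtain H B N where r: "(H,B,N)\<in>P" "N \<inter> X = {}" "B \<subseteq> X - {A_labelV' w (Vx i) (Sg x)}"
      "H \<inter> X = {A_labelV' w (Vx i) (Sg x)}" using supported[OF AS c(1)] by blast
    have "A_labelV' w (Vx i) (Sg x) \<in> H" using r(4) by blast
    from head_labelV'[OF r(1) this] have
      "H = {A_labelV' w (Vx i) (Sg Plus), A_labelV' w (Vx i) (Sg Minus)} \<or> A_observedV (Vx i) (Sg x) \<in> B" .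
    moreover have neq: "A_labelV' w (Vx i) (Sg y) \<noteq> A_labelV' w (Vx i) (Sg x)" using c(3) by simp
    hence "A_labelV' w (Vx i) (Sg y) \<notin> H" by (metis IntI r(4) singletonD c(2) neq)
    moreover have "A_labelV' w (Vx i) (Sg y) \<in> {A_labelV' w (Vx i) (Sg Plus), A_labelV' w (Vx i) (Sg Minus)}" by (cases y) simp_all
    ultimately have "A_observedV (Vx i) (Sg x) \<in> B" by blast
    hence "A_observedV (Vx i) (Sg x) \<in> X" using r(3) by blast
    from X_wf[OF this] show ?thesis by auto
  qed
  show False using obs[OF a b] obs[OF b a] by auto
qed

lemma uniqE:
  assumes a: "A_labelE' w (Vx j) (Vx i) (Sg Plus) \<in> X" and b: "A_labelE' w (Vx j) (Vx i) (Sg Minus) \<in> X"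
  shows False
proof -
  have obs: "\<sigma> (j,i) = Some x" if c: "A_labelE' w (Vx j) (Vx i) (Sg x) \<in> X" "A_labelE' w (Vx j) (Vx i) (Sg y) \<in> X" "x \<noteq> y" for x y
  proof -
    obtain H B N where r: "(H,B,N)\<in>P" "N \<inter> X = {}" "B \<subseteq> X - {A_labelE' w (Vx j) (Vx i) (Sg x)}"
      "H \<inter> X = {A_labelE' w (Vx j) (Vx i) (Sg x)}" using supported[OF AS c(1)] by blast
    have "A_labelE' w (Vx j) (Vx i) (Sg x) \<in> H" using r(4) by blast
    from head_labelE'[OF r(1) this] have
      "H = {A_labelE' w (Vx j) (Vx i) (Sg Plus), A_labelE' w (Vx j) (Vx i) (Sg Minus)} \<or> A_observedE (Vx j) (Vx i) (Sg x) \<in> B" .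
    moreover have neq: "A_labelE' w (Vx j) (Vx i) (Sg y) \<noteq> A_labelE' w (Vx j) (Vx i) (Sg x)" using c(3) by simp
    hence "A_labelE' w (Vx j) (Vx i) (Sg y) \<notin> H" by (metis IntI r(4) singletonD c(2) neq)
    moreover have "A_labelE' w (Vx j) (Vx i) (Sg y) \<in> {A_labelE' w (Vx j) (Vx i) (Sg Plus), A_labelE' w (Vx j) (Vx i) (Sg Minus)}" by (cases y) simp_all
    ultimately have "A_observedE (Vx j) (Vx i) (Sg x) \<in> B" by blast
    hence "A_observedE (Vx j) (Vx i) (Sg x) \<in> X" using r(3) by blast
    from X_wf[OF this] show ?thesis by auto
  qed
  show False using obs[OF a b] obs[OF b a] by auto
qed

lemma cond2:
  assumes "W' \<subset> {i. A_active (Vx i) \<in> X}"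
  shows "\<exists>\<sigma>' \<mu>'. ext_E E \<sigma> \<sigma>' \<and> ext_V V \<mu> \<mu>' \<and>
           (\<forall>i\<in>W'. i \<notin> Inp \<longrightarrow> consistent_at E \<sigma>' \<mu>' i)"
proof -
  obtain w where w: "A_active (Vx w) \<in> X" "w \<notin> W'" using assms by blast
  have wV: "w \<in> V" using X_wf[OF w(1)] by auto
  define mu' where "mu' i = (if A_labelV' (Vx w) (Vx i) (Sg Plus) \<in> X then Plus
      else if A_labelV' (Vx w) (Vx i) (Sg Minus) \<in> X then Minus else (case \<mu> i of None \<Rightarrow> Plus | Some x \<Rightarrow> x))" for i
  define sg' where "sg' e = (if A_labelE' (Vx w) (Vx (fst e)) (Vx (snd e)) (Sg Plus) \<in> X then Plus
      else if A_labelE' (Vx w) (Vx (fst e)) (Vx (snd e)) (Sg Minus) \<in> X then Minus else (case \<sigma> e of None \<Rightarrow> Plus | Some x \<Rightarrow> x))" for e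
  have mu'_eq: "mu' i = x" if "A_labelV' (Vx w) (Vx i) (Sg x) \<in> X" for i x
  proof (cases x)
    case Plus thus ?thesis using that unfolding mu'_def by simp
  next
    case Minus
    hence "A_labelV' (Vx w) (Vx i) (Sg Plus) \<notin> X" using that uniqV by blast
    thus ?thesis using that Minus unfolding mu'_def by simp
  qed
  have sg'_eq: "sg' (j,i) = x" if "A_labelE' (Vx w) (Vx j) (Vx i) (Sg x) \<in> X" for j i x
  proof (cases x)
    case Plus thus ?thesis using that unfolding sg'_def by simp
  next
    case Minus
    hence "A_labelE' (Vx w) (Vx j) (Vx i) (Sg Plus) \<notin> X" using that uniqE by blast
    thus ?thesis using that Minus unfolding sg'_def by simp
  qed
  have extV: "ext_V V \<mu> mu'"
    unfolding ext_V_def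
  proof (intro ballI allI impI)
    fix i x assume i: "i \<in> V" "\<mu> i = Some x"
    have "A_observedV (Vx i) (Sg x) \<in> tau_facts V E \<sigma> Inp \<mu>" using i unfolding tau_facts_def by blast
    hence "A_observedV (Vx i) (Sg x) \<in> X" by (rule fact_in)
    hence "A_labelV' (Vx w) (Vx i) (Sg x) \<in> X" using model_rule[OF AS rule_in8[OF wV i(1)]] w(1) by blast
    thus "mu' i = x" by (rule mu'_eq)
  qed
  have extE: "ext_E E \<sigma> sg'"
    unfolding ext_E_def
  proof (intro ballI allI impI)
    fix e x assume e: "e \<in> E" "\<sigma> e = Some x"
    obtain j i where ji: "e = (j,i)" by (cases e)
    have jiV: "j \<in> V" "i \<in> V" using e(1) ji EV by auto
    have e2: "(j,i) \<in> E" "\<sigma> (j,i) = Some x" using e ji by auto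
    have "A_observedE (Vx j) (Vx i) (Sg x) \<in> tau_facts V E \<sigma> Inp \<mu>" using e2 unfolding tau_facts_def by blast
    hence "A_observedE (Vx j) (Vx i) (Sg x) \<in> X" by (rule fact_in)
    hence "A_labelE' (Vx w) (Vx j) (Vx i) (Sg x) \<in> X" using model_rule[OF AS rule_in9[OF wV jiV]] w(1) by blast
    thus "sg' e = x" using ji sg'_eq by simp
  qed
  have cons: "consistent_at E sg' mu' i" if i: "i \<in> W'" for i
  proof -
    have act: "A_active (Vx i) \<in> X" using i assms by blast
    have iV: "i \<in> V" using X_wf[OF act] by auto
    have iw: "i \<noteq> w" using i w(2) by blast
    have "A_vertexMIC (Vx i) \<in> X" using model_rule[OF AS rule_in6[OF iV]] act by blast
    hence "{A_labelV' (Vx w) (Vx i) (Sg Plus), A_labelV' (Vx w) (Vx i) (Sg Minus)} \<inter> X \<noteq> {}"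
      using model_rule[OF AS rule_in7[OF wV iV]] w(1) by blast
    then obtain x where lx: "A_labelV' (Vx w) (Vx i) (Sg x) \<in> X" by blast
    have rx: "A_receive' (Vx w) (Vx i) (Sg x) \<in> X"
    proof (rule ccontr)
      assume "A_receive' (Vx w) (Vx i) (Sg x) \<notin> X"
      thus False using model_rule[OF AS rule_in10[OF wV iV iw]] lx act by blast
    qed
    obtain H B N where r: "(H,B,N)\<in>P" "B \<subseteq> X - {A_receive' (Vx w) (Vx i) (Sg x)}"
      "H \<inter> X = {A_receive' (Vx w) (Vx i) (Sg x)}" using supported[OF AS rx] by blast
    have "A_receive' (Vx w) (Vx i) (Sg x) \<in> H" using r(3) by blast
    from head_receive'[OF r(1) this] obtain u x1 x2 where
      u: "A_labelE' (Vx w) u (Vx i) x1 \<in> B" "A_labelV' (Vx w) u x2 \<in> B"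
         "(Sg x = Sg Plus \<and> x1 = x2) \<or> (Sg x = Sg Minus \<and> x1 \<noteq> x2)" by blast
    have uX: "A_labelE' (Vx w) u (Vx i) x1 \<in> X" "A_labelV' (Vx w) u x2 \<in> X" using u r(2) by auto
    obtain j a where ja: "u = Vx j" "x1 = Sg a" "(j,i) \<in> E" using X_wf[OF uX(1)] by auto
    obtain b where b: "x2 = Sg b" using X_wf[OF uX(2)] by auto
    have "sg' (j,i) = a" using sg'_eq uX(1) ja by simp
    moreover have "mu' j = b" using mu'_eq uX(2) ja b by simp
    moreover have "mu' i = x" using mu'_eq lx by simp
    ultimately have "mu' i = smult (mu' j) (sg' (j,i))" using u(3) ja b
      by (cases a; cases b) auto
    thus ?thesis unfolding consistent_at_def using ja by blast
  qed
  show ?thesis using extV extE cons by blast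
qed

end

context asp begin

lemma cond1:
  assumes ext: "ext_E E \<sigma> s" "ext_V V \<mu> m"
  shows "\<exists>i\<in>{i. A_active (Vx i) \<in> X}. i \<notin> Inp \<and> \<not> consistent_at E s m i"
proof (rule ccontr)
  assume nt: "\<not> ?thesis"
  have c: "consistent_at E s m i" if a: "A_active (Vx i) \<in> X" for i
  proof -
    have "i \<notin> Inp" using X_wf[OF a] by auto
    thus ?thesis using nt a by blast
  qed
  have cons: "\<And>i. A_active (Vx i) \<in> X \<Longrightarrow> \<exists>j. (j,i)\<in>E \<and> m i = smult (m j) (s (j,i))"
    using c unfolding consistent_at_def by blast
  have extV: "\<And>i x. i \<in> V \<Longrightarrow> \<mu> i = Some x \<Longrightarrow> m i = x" using ext(2) unfolding ext_V_def by blast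
  have extE: "\<And>j i x. (j,i) \<in> E \<Longrightarrow> \<sigma> (j,i) = Some x \<Longrightarrow> s (j,i) = x" using ext(1) unfolding ext_E_def by blast
  let ?M = "{a\<in>X. keep m s a}"
  have "is_model ?M (reduct P X)"
    unfolding is_model_def
  proof (clarify)
    fix H B assume hb: "(H,B) \<in> reduct P X" "B \<subseteq> ?M" "H \<inter> ?M = {}"
    then obtain N where r: "(H,B,N) \<in> P" "N \<inter> X = {}" using reduct_mem by blast
    show False using M_model[OF cons extV extE r hb(2)] hb(3) by blast
  qed
  moreover have "A_bottom \<notin> ?M" by simp
  hence "?M \<subset> X" using bottom_in by blast
  ultimately show False using AS unfolding answer_set_def by blast
qed

end

theorem theorem3:
  fixes V :: "'v set" and E :: "('v \<times> 'v) set" and \<sigma> :: "'v \<times> 'v \<rightharpoonup> sign"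
    and Inp :: "'v set" and \<mu> :: "'v \<rightharpoonup> sign" and X :: "'v atom set"
  assumes "influence_graph V E \<sigma> Inp"
    and "vertex_labeling V \<mu>"
    and "answer_set (ground_PD V E \<sigma> Inp \<mu>) X"
  shows "MIC V E \<sigma> Inp \<mu> {i. A_active (Vx i) \<in> X}"
proof -
  have EV: "E \<subseteq> V \<times> V" using assms(1) unfolding influence_graph_def by blast
  interpret asp V E \<sigma> Inp \<mu> X using EV assms(3) by unfold_locales
  have sub: "{i. A_active (Vx i) \<in> X} \<subseteq> V"
  proof
    fix i assume "i \<in> {i. A_active (Vx i) \<in> X}"
    hence "A_active (Vx i) \<in> X" by simp
    from X_wf[OF this] show "i \<in> V" by auto
  qed
  show ?thesis unfolding MIC_def using sub cond1 cond2 by blast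
qed

end
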